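(* In the setting described in the context, assume condition (j). Assume moreover that there is a sequence $(\overline T_n)_n$ with $T_{2n}>\overline T_n$ for all $n$, such that for every $n\in\mathbb N$ and every $T\in(\overline T_n,T_{2n}]$ there is a constant $d_n>0$ (depending on $T$, independent of the data) with $$E_S(t_{2n}+T)\le d_n\int_{t_{2n}}^{t_{2n}+T}\|B_1^*(t)w_t(t)\|_{U_1}^2\,dt$$ for every weak solution $w$ of $w_{tt}+Aw+B_1(t)B_1^*(t)w_t=f(w)$ on $(t_{2n},t_{2n+1})$, $w(t_{2n})=w_0^n\in V$, $w_t(t_{2n})=w_1^n\in H$. Then every solution $u$ of $$u_{tt}(t)+Au(t)+B_1(t)B_1^*(t)u_t(t)-B_3(t)B_3^*(t)u_t(t)=f(u),\ t>0,\qquad u(0)=u_0,\ u_t(0)=u_1,$$ satisfies $E_S(t_{2n+1})\le\hat d_nE_S(t_{2n})$ for all $n\in\mathbb N$, where $\hat d_n=\frac{d_n}{d_n+1}$ and $d_n$ is the constant corresponding to $T=T_{2n}$.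
   Context: $E_S(t)=\frac12(\|u(t)\|_V^2+\|u_t(t)\|_H^2)-\mathcal F(u(t))$ (similarly for $w$). $H$ is a real Hilbert space, $A:\mathcal D(A)\to H$ a densely defined, self-adjoint, positive, coercive linear operator, $V=\mathcal D(A^{1/2})$ with $\|v\|_V=\|A^{1/2}v\|_H$, $V\hookrightarrow H\equiv H'\hookrightarrow V'$ densely. $U_1,U_3$ are real Hilbert spaces, $B_i(t)\in\mathcal L(U_i,H)$, $i=1,3$, with $B_1^*(t)B_3^*(t)=0$ for $t>0$. There is a sequence $0=t_0<t_1<\cdots$; $I_n=[t_n,t_{n+1})$, $T_n=t_{n+1}-t_n$; $B_3=0$ on $I_{2n}$, $B_1=0$ on $I_{2n+1}$, $B_1\in C^1([t_{2n},t_{2n+1}];\mathcal L(U_1,H))$, $B_3\in C([t_{2n+1},t_{2n+2}];\mathcal L(U_3,H))$. $W_1$ is a Hilbert space with $\|u\|_{W_1}^2\le C_1\|u\|_H^2$ for $u\in H$. $f:V\to H$ is locally Lipschitz, $\mathcal F:V\to\mathbb R$ with $\mathcal F(0)=0$, $\mathcal F'(u)v=\langle f(u),v\rangle_{V',V}$. (j): for every $n$ there are $0<m_{2n}\le M_{2n}$ with $m_{2n}\|u\|_{W_1}^2\le\|B_1^*(t)u\|_{U_1}^2\le M_{2n}\|u\|_{W_1}^2$ for $u\in H$, $t\in I_{2n}$. *)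

theory Defs
  imports "HOL-Analysis.Analysis"
begin

definition linear_on_dom :: "'h::real_vector set \<Rightarrow> ('h \<Rightarrow> 'h) \<Rightarrow> bool" where
  "linear_on_dom D T \<longleftrightarrow> subspace D \<and>
     (\<forall>x\<in>D. \<forall>y\<in>D. T (x + y) = T x + T y) \<and> (\<forall>c. \<forall>x\<in>D. T (c *\<^sub>R x) = c *\<^sub>R T x)"

text \<open>Densely defined self-adjoint (possibly unbounded) linear operator T with domain D
  on a real Hilbert space: D(T^*) = D and T^* = T on D.\<close>
definition self_adjoint_op :: "'h::{real_inner,complete_space} set \<Rightarrow> ('h \<Rightarrow> 'h) \<Rightarrow> bool" where
  "self_adjoint_op D T \<longleftrightarrow> linear_on_dom D T \<and> closure D = UNIV \<and>
     {y. \<exists>z. \<forall>x\<in>D. inner (T x) y = inner x z} = D \<and>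
     (\<forall>x\<in>D. \<forall>y\<in>D. inner (T x) y = inner x (T y))"

definition positive_op :: "'h::real_inner set \<Rightarrow> ('h \<Rightarrow> 'h) \<Rightarrow> bool" where
  "positive_op D T \<longleftrightarrow> (\<forall>x\<in>D. 0 \<le> inner (T x) x)"

definition coercive_op :: "'h::real_inner set \<Rightarrow> ('h \<Rightarrow> 'h) \<Rightarrow> bool" where
  "coercive_op D T \<longleftrightarrow> (\<exists>c>0. \<forall>x\<in>D. c * (norm x)\<^sup>2 \<le> inner (T x) x)"

text \<open>S with domain DS is the (positive self-adjoint) square root A^(1/2) of A with domain DA:
  S is positive self-adjoint and S o S = A (including equality of domains).\<close>
definition is_op_sqrt ::
  "'h::{real_inner,complete_space} set \<Rightarrow> ('h \<Rightarrow> 'h) \<Rightarrow> 'h set \<Rightarrow> ('h \<Rightarrow> 'h) \<Rightarrow> bool" where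
  "is_op_sqrt DS S DA A \<longleftrightarrow> self_adjoint_op DS S \<and> positive_op DS S \<and>
     DA = {x\<in>DS. S x \<in> DS} \<and> (\<forall>x\<in>DA. S (S x) = A x)"

definition is_adjoint ::
  "('u::real_inner \<Rightarrow>\<^sub>L 'h::real_inner) \<Rightarrow> ('h \<Rightarrow>\<^sub>L 'u) \<Rightarrow> bool" where
  "is_adjoint B Bs \<longleftrightarrow> (\<forall>x y. inner (B x) y = inner x (Bs y))"

text \<open>f : V \<rightarrow> H locally Lipschitz (Lipschitz on bounded sets of V), with V = DS,
  norm_V v = norm (S v).\<close>
definition loc_lipschitz_V :: "'h set \<Rightarrow> ('h \<Rightarrow> 'h) \<Rightarrow> ('h::real_normed_vector \<Rightarrow> 'h) \<Rightarrow> bool" where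
  "loc_lipschitz_V DS S f \<longleftrightarrow> (\<forall>r>0. \<exists>L. \<forall>x\<in>DS. \<forall>y\<in>DS.
      norm (S x) \<le> r \<longrightarrow> norm (S y) \<le> r \<longrightarrow> norm (f x - f y) \<le> L * norm (S (x - y)))"

text \<open>F : V \<rightarrow> R is Frechet differentiable on V (w.r.t. the V-norm) with
  F'(u) v = <f(u), v>.\<close>
definition V_derivative :: "'h set \<Rightarrow> ('h \<Rightarrow> 'h) \<Rightarrow> ('h \<Rightarrow> real) \<Rightarrow> ('h::real_inner \<Rightarrow> 'h) \<Rightarrow> bool" where
  "V_derivative DS S F f \<longleftrightarrow> (\<forall>u\<in>DS. \<forall>e>0. \<exists>d>0. \<forall>v\<in>DS.
      norm (S (v - u)) < d \<longrightarrow> \<bar>F v - F u - inner (f u) (v - u)\<bar> \<le> e * norm (S (v - u)))"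

text \<open>Weak solution on the interval J of  u'' + A u + D(t) u' = f(u):
  u \<in> C(J;V) \<inter> C^1(J;H) with derivative ut, and for every test vector phi \<in> V and s \<le> t in J,
  <ut t, phi> - <ut s, phi> = integral over [s,t] of
     ( <f(u), phi> - <A^(1/2) u, A^(1/2) phi> - <D(tau) ut, phi> ).\<close>
definition weak_sol ::
  "real set \<Rightarrow> 'h set \<Rightarrow> ('h \<Rightarrow> 'h) \<Rightarrow> ('h \<Rightarrow> 'h) \<Rightarrow> (real \<Rightarrow> 'h \<Rightarrow> 'h)
   \<Rightarrow> (real \<Rightarrow> 'h::{real_inner,complete_space}) \<Rightarrow> (real \<Rightarrow> 'h) \<Rightarrow> bool" where
  "weak_sol J DS S f Dmp u ut \<longleftrightarrow>
     (\<forall>t\<in>J. u t \<in> DS) \<and>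
     continuous_on J u \<and> continuous_on J (\<lambda>t. S (u t)) \<and>
     (\<forall>t\<in>J. (u has_vector_derivative ut t) (at t within J)) \<and> continuous_on J ut \<and>
     (\<forall>phi\<in>DS. \<forall>s\<in>J. \<forall>t\<in>J. s \<le> t \<longrightarrow>
        ((\<lambda>tau. inner (f (u tau)) phi - inner (S (u tau)) (S phi) - inner (Dmp tau (ut tau)) phi)
          has_integral (inner (ut t) phi - inner (ut s) phi)) {s..t})"

definition energy :: "('h \<Rightarrow> 'h) \<Rightarrow> ('h \<Rightarrow> real) \<Rightarrow> (real \<Rightarrow> 'h) \<Rightarrow> (real \<Rightarrow> 'h::real_normed_vector) \<Rightarrow> real \<Rightarrow> real" where
  "energy S F u ut t = (1/2) * ((norm (S (u t)))\<^sup>2 + (norm (ut t))\<^sup>2) - F (u t)"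

end

theory Submission
  imports Defs
begin


typedef ('a::"{real_inner,complete_space}") hb = "UNIV :: 'a set" by auto
setup_lifting type_definition_hb

instantiation hb :: ("{real_inner,complete_space}") real_inner
begin
lift_definition zero_hb :: "'a hb" is 0 .
lift_definition plus_hb :: "'a hb \<Rightarrow> 'a hb \<Rightarrow> 'a hb" is "(+)" .
lift_definition minus_hb :: "'a hb \<Rightarrow> 'a hb \<Rightarrow> 'a hb" is "(-)" .
lift_definition uminus_hb :: "'a hb \<Rightarrow> 'a hb" is uminus .
lift_definition scaleR_hb :: "real \<Rightarrow> 'a hb \<Rightarrow> 'a hb" is scaleR .
lift_definition norm_hb :: "'a hb \<Rightarrow> real" is norm .
lift_definition sgn_hb :: "'a hb \<Rightarrow> 'a hb" is sgn .
lift_definition dist_hb :: "'a hb \<Rightarrow> 'a hb \<Rightarrow> real" is dist .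
lift_definition inner_hb :: "'a hb \<Rightarrow> 'a hb \<Rightarrow> real" is inner .
definition uniformity_hb :: "('a hb \<times> 'a hb) filter" where
  "uniformity_hb = (INF e\<in>{0<..}. principal {(x, y). dist x y < e})"
definition open_hb :: "'a hb set \<Rightarrow> bool" where
  "open_hb U = (\<forall>x\<in>U. eventually (\<lambda>(x', y). x' = x \<longrightarrow> y \<in> U) uniformity)"
instance
proof
  fix x y z :: "'a hb" and a b :: real and U :: "'a hb set"
  show "x + y + z = x + (y + z)" by transfer (simp add: add.assoc)
  show "x + y = y + x" by transfer (simp add: add.commute)
  show "0 + x = x" by transfer simp
  show "- x + x = 0" by transfer simp
  show "x - y = x + - y" by transfer simp
  show "a *\<^sub>R (x + y) = a *\<^sub>R x + a *\<^sub>R y" by transfer (simp add: scaleR_add_right)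
  show "(a + b) *\<^sub>R x = a *\<^sub>R x + b *\<^sub>R x" by transfer (simp add: scaleR_add_left)
  show "a *\<^sub>R b *\<^sub>R x = (a * b) *\<^sub>R x" by transfer simp
  show "1 *\<^sub>R x = x" by transfer simp
  show "dist x y = norm (x - y)" by transfer (simp add: dist_norm)
  show "sgn x = inverse (norm x) *\<^sub>R x" by transfer (simp add: sgn_div_norm)
  show "uniformity = (INF e\<in>{0<..}. principal {(x, y::'a hb). dist x y < e})" by (simp add: uniformity_hb_def)
  show "open U = (\<forall>x\<in>U. eventually (\<lambda>(x', y). x' = x \<longrightarrow> y \<in> U) uniformity)" by (simp add: open_hb_def)
  show "inner x y = inner y x" by transfer (rule inner_commute)
  show "inner (x + y) z = inner x z + inner y z" by transfer (rule inner_add_left)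
  show "inner (a *\<^sub>R x) y = a * inner x y" by transfer simp
  show "0 \<le> inner x x" by transfer simp
  show "inner x x = 0 \<longleftrightarrow> x = 0" by transfer simp
  show "norm x = sqrt (inner x x)" by transfer (rule norm_eq_sqrt_inner)
qed
end

lemma dist_hb_Rep: "dist x y = dist (Rep_hb x) (Rep_hb y)" by transfer simp

instance hb :: ("{real_inner,complete_space}") complete_space
proof
  fix X :: "nat \<Rightarrow> 'a hb"
  assume "Cauchy X"
  hence "Cauchy (\<lambda>n. Rep_hb (X n))" unfolding Cauchy_def by (simp add: dist_hb_Rep)
  then obtain L where L: "(\<lambda>n. Rep_hb (X n)) \<longlonglongrightarrow> L" using convergent_def Cauchy_convergent_iff by blast
  have "X \<longlonglongrightarrow> Abs_hb L"
    using L unfolding lim_sequentially by (simp add: dist_hb_Rep Abs_hb_inverse)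
  thus "convergent X" by (auto simp: convergent_def)
qed

instance hb :: ("{real_inner,complete_space}") banach ..

lemma Rep_hb_add: "Rep_hb (x + y) = Rep_hb x + Rep_hb y" by transfer simp
lemma Rep_hb_diff: "Rep_hb (x - y) = Rep_hb x - Rep_hb y" by transfer simp
lemma Rep_hb_scaleR: "Rep_hb (c *\<^sub>R x) = c *\<^sub>R Rep_hb x" by transfer simp
lemma norm_Rep_hb: "norm (Rep_hb x) = norm x" by transfer simp
lemma Abs_hb_add: "Abs_hb (x + y) = Abs_hb x + Abs_hb y"
  by (metis Abs_hb_inverse Rep_hb_add Rep_hb_inverse UNIV_I)
lemma Abs_hb_scaleR: "Abs_hb (c *\<^sub>R x) = c *\<^sub>R Abs_hb x"
  by (metis Abs_hb_inverse Rep_hb_scaleR Rep_hb_inverse UNIV_I)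
lemma Abs_hb_diff: "Abs_hb (x - y) = Abs_hb x - Abs_hb y"
  by (metis Abs_hb_inverse Rep_hb_diff Rep_hb_inverse UNIV_I)
lemma norm_Abs_hb: "norm (Abs_hb x) = norm x"
  by (metis Abs_hb_inverse UNIV_I norm_Rep_hb)
lemma bl_Rep_hb: "bounded_linear Rep_hb"
  by (rule bounded_linear_intro[where K=1]) (auto simp: Rep_hb_add Rep_hb_scaleR norm_Rep_hb)
lemma bl_Abs_hb: "bounded_linear Abs_hb"
  by (rule bounded_linear_intro[where K=1]) (auto simp: Abs_hb_add Abs_hb_scaleR norm_Abs_hb)

lemma bl_vd:
  assumes "bounded_linear L" "(g has_vector_derivative g') F"
  shows "((\<lambda>x. L (g x)) has_vector_derivative L g') F"
  using bounded_linear.has_derivative[OF assms(1) assms(2)[unfolded has_vector_derivative_def]]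
  unfolding has_vector_derivative_def by (simp add: linear_simps(5)[OF assms(1)])

definition avg :: "real \<Rightarrow> (real \<Rightarrow> 'h::{real_inner,complete_space}) \<Rightarrow> real \<Rightarrow> 'h" where
  "avg h g t = (1/h) *\<^sub>R Rep_hb (integral {t..t+h} (\<lambda>\<tau>. Abs_hb (g \<tau>)))"

lemma cont_Abs: "continuous_on S g \<Longrightarrow> continuous_on S (\<lambda>x. Abs_hb (g x))"
  using bounded_linear.continuous_on[OF bl_Abs_hb] by blast

lemma avg_inner:
  fixes g :: "real \<Rightarrow> 'h::{real_inner,complete_space}"
  assumes gc: "continuous_on {p..q'} g" and "p \<le> t" "t + h \<le> q'" "0 < h"
  shows "((\<lambda>\<tau>. inner (g \<tau>) c) has_integral (h * inner (avg h g t) c)) {t..t+h}"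
proof -
  have "continuous_on {t..t+h} (\<lambda>x. Abs_hb (g x))"
    by (rule cont_Abs, rule continuous_on_subset[OF gc]) (use assms in auto)
  hence "(\<lambda>x. Abs_hb (g x)) integrable_on {t..t+h}" by (rule integrable_continuous_real)
  hence I: "((\<lambda>x. Abs_hb (g x)) has_integral integral {t..t+h} (\<lambda>x. Abs_hb (g x))) {t..t+h}"
    by (rule integrable_integral)
  have bl: "bounded_linear (\<lambda>x. inner (Rep_hb x) c)"
    using bounded_linear_compose[OF bounded_linear_inner_left[of c] bl_Rep_hb] by simp
  have "((\<lambda>x. inner (Rep_hb (Abs_hb (g x))) c) has_integral inner (Rep_hb (integral {t..t+h} (\<lambda>x. Abs_hb (g x)))) c) {t..t+h}"
    using has_integral_linear[OF I bl] by (simp add: o_def)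
  thus ?thesis using assms by (simp add: avg_def Abs_hb_inverse)
qed

lemma avg_deriv:
  fixes g :: "real \<Rightarrow> 'h::{real_inner,complete_space}"
  assumes gc: "continuous_on {p..q'} g" and t: "t \<in> {p..q}" and hq: "q + h \<le> q'" and h: "0 < h"
  shows "((\<lambda>t. avg h g t) has_vector_derivative ((1/h) *\<^sub>R (g (t+h) - g t))) (at t within {p..q})"
proof -
  let ?G = "\<lambda>x. Abs_hb (g x)"
  have Gc: "continuous_on {p..q'} ?G" by (rule cont_Abs[OF gc])
  have Gi: "?G integrable_on {p..q'}" by (rule integrable_continuous_real[OF Gc])
  have sub: "{p..q} \<subseteq> {p..q'}" using hq h by auto
  have D1: "((\<lambda>x. integral {p..x} ?G) has_vector_derivative ?G t) (at t within {p..q})"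
    using has_vector_derivative_within_subset[OF integral_has_vector_derivative[OF Gc] sub] t sub by blast
  have sh: "((\<lambda>x. x + h) has_vector_derivative 1) (at t within {p..q})"
    by (auto intro!: derivative_eq_intros simp: has_real_derivative_iff_has_vector_derivative[symmetric])
  have img: "(\<lambda>x. x + h) ` {p..q} \<subseteq> {p..q'}" using hq h by auto
  have D2': "((\<lambda>x. integral {p..x} ?G) has_vector_derivative ?G (t+h)) (at (t+h) within (\<lambda>x. x + h) ` {p..q})"
    using has_vector_derivative_within_subset[OF integral_has_vector_derivative[OF Gc] img] t hq h by auto
  have D2: "((\<lambda>x. integral {p..x+h} ?G) has_vector_derivative ?G (t+h)) (at t within {p..q})"
    using vector_diff_chain_within[OF sh D2'] by (simp add: o_def)
  have eq: "\<And>x. x \<in> {p..q} \<Longrightarrow> integral {x..x+h} ?G = integral {p..x+h} ?G - integral {p..x} ?G"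
  proof -
    fix x assume x: "x \<in> {p..q}"
    have "?G integrable_on {p..x+h}" by (rule integrable_on_subinterval[OF Gi]) (use x hq h in auto)
    from Henstock_Kurzweil_Integration.integral_combine[OF _ _ this, of x] x h show "integral {x..x+h} ?G = integral {p..x+h} ?G - integral {p..x} ?G"
      by (auto simp: algebra_simps)
  qed
  have D3: "((\<lambda>x. integral {p..x+h} ?G - integral {p..x} ?G) has_vector_derivative (?G (t+h) - ?G t)) (at t within {p..q})"
    by (rule has_vector_derivative_diff[OF D2 D1])
  have D4: "((\<lambda>x. integral {x..x+h} ?G) has_vector_derivative (?G (t+h) - ?G t)) (at t within {p..q})"
    by (rule has_vector_derivative_transform_within[OF D3, where d=1]) (use t eq in auto)
  have D5: "((\<lambda>x. (1/h) *\<^sub>R Rep_hb (integral {x..x+h} ?G)) has_vector_derivative (1/h) *\<^sub>R Rep_hb (?G (t+h) - ?G t)) (at t within {p..q})"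
    by (rule bounded_linear.has_vector_derivative[OF _ D4]) (rule bounded_linear_compose[OF bounded_linear_scaleR_right bl_Rep_hb])
  thus ?thesis unfolding avg_def by (simp add: Rep_hb_diff Abs_hb_inverse)
qed

lemma avg_near:
  fixes g :: "real \<Rightarrow> 'h::{real_inner,complete_space}"
  assumes gc: "continuous_on {p..q'} g" and "p \<le> t" "t + h \<le> q'" "0 < h"
    and B: "\<And>\<tau>. \<tau> \<in> {t..t+h} \<Longrightarrow> norm (g \<tau> - c) \<le> B"
  shows "norm (avg h g t - c) \<le> B"
proof -
  let ?G = "\<lambda>x. Abs_hb (g x)"
  have "continuous_on {t..t+h} ?G"
    by (rule cont_Abs, rule continuous_on_subset[OF gc]) (use assms in auto)
  hence I: "(?G has_integral integral {t..t+h} ?G) {t..t+h}"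
    by (rule integrable_integral[OF integrable_continuous_real])
  have C: "((\<lambda>x. Abs_hb c) has_integral h *\<^sub>R Abs_hb c) {t..t+h}"
    using has_integral_const_real[of "Abs_hb c" t "t+h"] assms by simp
  have D: "((\<lambda>x. ?G x - Abs_hb c) has_integral (integral {t..t+h} ?G - h *\<^sub>R Abs_hb c)) {t..t+h}"
    by (rule has_integral_diff[OF I C])
  have B0: "0 \<le> B" using B[of t] assms by (meson atLeastAtMost_iff less_eq_real_def norm_ge_zero order_trans le_add_same_cancel1)
  have "norm (integral {t..t+h} ?G - h *\<^sub>R Abs_hb c) \<le> B * Henstock_Kurzweil_Integration.content (cbox t (t+h))"
  proof (rule has_integral_bound[OF B0])
    show "((\<lambda>x. ?G x - Abs_hb c) has_integral (integral {t..t+h} ?G - h *\<^sub>R Abs_hb c)) (cbox t (t+h))"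
      using D by simp
    fix x assume "x \<in> cbox t (t+h)"
    thus "norm (?G x - Abs_hb c) \<le> B" using B[of x] by (simp add: Abs_hb_diff[symmetric] norm_Abs_hb)
  qed
  hence n: "norm (integral {t..t+h} ?G - h *\<^sub>R Abs_hb c) \<le> B * h" using assms by simp
  have "avg h g t - c = (1/h) *\<^sub>R Rep_hb (integral {t..t+h} ?G - h *\<^sub>R Abs_hb c)"
    using assms by (simp add: avg_def Rep_hb_diff Rep_hb_scaleR Abs_hb_inverse scaleR_diff_right)
  hence "norm (avg h g t - c) = (1/h) * norm (integral {t..t+h} ?G - h *\<^sub>R Abs_hb c)"
    using assms by (simp add: norm_Rep_hb)
  also have "\<dots> \<le> (1/h) * (B * h)" using n assms by (intro mult_left_mono) auto
  also have "\<dots> = B" using assms by simp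
  finally show ?thesis .
qed

lemma avg_conv:
  fixes g :: "real \<Rightarrow> 'h::{real_inner,complete_space}"
  assumes gc: "continuous_on {p..q'} g" and t: "t \<in> {p..q}"
    and hk: "\<And>k. 0 < hk k" "\<And>k. q + hk k \<le> q'" and lim: "hk \<longlonglongrightarrow> 0"
  shows "(\<lambda>k. avg (hk k) g t) \<longlonglongrightarrow> g t"
proof (rule tendstoI)
  fix e :: real assume e: "0 < e"
  have tq: "t \<in> {p..q'}" using t hk(1)[of 0] hk(2)[of 0] by auto
  from gc tq e obtain d where d: "0 < d" "\<And>\<tau>. \<tau> \<in> {p..q'} \<Longrightarrow> dist \<tau> t < d \<Longrightarrow> dist (g \<tau>) (g t) < e/2"
    unfolding continuous_on_iff by (metis half_gt_zero)
  have ev: "eventually (\<lambda>k. hk k < d) sequentially"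
    using order_tendstoD(2)[OF lim d(1)] .
  show "eventually (\<lambda>k. dist (avg (hk k) g t) (g t) < e) sequentially"
  proof (rule eventually_mono[OF ev])
    fix k assume hd: "hk k < d"
    have "norm (avg (hk k) g t - g t) \<le> e/2"
    proof (rule avg_near[OF gc])
      show "p \<le> t" "t + hk k \<le> q'" "0 < hk k" using t hk[of k] by auto
      fix \<tau> assume "\<tau> \<in> {t..t + hk k}"
      hence "\<tau> \<in> {p..q'}" "dist \<tau> t < d" using t hk[of k] hd by (auto simp: dist_real_def)
      thus "norm (g \<tau> - g t) \<le> e/2" using d(2) by (fastforce simp: dist_norm)
    qed
    thus "dist (avg (hk k) g t) (g t) < e" using e by (simp add: dist_norm)
  qed
qed

lemma avg_ftc:
  fixes u ut :: "real \<Rightarrow> 'h::{real_inner,complete_space}"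
  assumes der: "\<And>x. x \<in> {t..t+h} \<Longrightarrow> (u has_vector_derivative ut x) (at x within {t..t+h})"
    and h: "0 < h"
  shows "avg h ut t = (1/h) *\<^sub>R (u (t+h) - u t)"
proof -
  have "((\<lambda>x. Abs_hb (ut x)) has_integral (Abs_hb (u (t+h)) - Abs_hb (u t))) {t..t+h}"
    by (rule fundamental_theorem_of_calculus) (use h in \<open>auto intro!: bl_vd[OF bl_Abs_hb] der\<close>)
  hence "integral {t..t+h} (\<lambda>x. Abs_hb (ut x)) = Abs_hb (u (t+h)) - Abs_hb (u t)" by (rule integral_unique)
  thus ?thesis by (simp add: avg_def Rep_hb_diff Abs_hb_inverse)
qed


lemma vd_inner:
  assumes "(V has_vector_derivative V') (at x within s)" "(W has_vector_derivative W') (at x within s)"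
  shows "((\<lambda>t. inner (V t) (W t)) has_vector_derivative (inner (V x) W' + inner V' (W x))) (at x within s)"
  using has_derivative_inner[OF assms(1)[unfolded has_vector_derivative_def] assms(2)[unfolded has_vector_derivative_def]]
  unfolding has_vector_derivative_def
  by (rule has_derivative_eq_rhs) (auto simp: algebra_simps fun_eq_iff)

lemma lin_dom_facts:
  fixes x y :: "'h::real_vector"
  assumes "linear_on_dom DS S" "x \<in> DS" "y \<in> DS"
  shows "x - y \<in> DS" "x + y \<in> DS" "c *\<^sub>R x \<in> DS" "S (x - y) = S x - S y" "S (x + y) = S x + S y"
    "S (c *\<^sub>R x) = c *\<^sub>R S x"
proof -
  have sub: "subspace DS" and add: "\<forall>x\<in>DS. \<forall>y\<in>DS. S (x + y) = S x + S y"
    and sc: "\<forall>c. \<forall>x\<in>DS. S (c *\<^sub>R x) = c *\<^sub>R S x"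
    using assms(1) unfolding linear_on_dom_def by auto
  show "x - y \<in> DS" "x + y \<in> DS" "c *\<^sub>R x \<in> DS"
    using sub assms by (auto simp: subspace_diff subspace_add subspace_scale)
  show "S (x + y) = S x + S y" "S (c *\<^sub>R x) = c *\<^sub>R S x" using add sc assms by auto
  have ny: "-y \<in> DS" using sub assms by (simp add: subspace_neg)
  have "S (-y) = - S y" using sc assms by (metis scaleR_minus1_left)
  moreover have "S (x - y) = S (x + -y)" by simp
  moreover have "S (x + -y) = S x + S (-y)" using add assms ny by blast
  ultimately have "S (x - y) = S x - S y" by simp
  thus "S (x - y) = S x - S y" .
qed

definition EH :: "('h::{real_inner,complete_space} \<Rightarrow> 'h) \<Rightarrow> (real \<Rightarrow> 'h) \<Rightarrow> (real \<Rightarrow> 'h) \<Rightarrow> real \<Rightarrow> real \<Rightarrow> real" where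
  "EH S u ut h t = (1/2) * (inner (avg h ut t) (avg h ut t) + inner (avg h (\<lambda>\<tau>. S (u \<tau>)) t) (avg h (\<lambda>\<tau>. S (u \<tau>)) t))"

lemma reg_energy:
  fixes u ut G :: "real \<Rightarrow> 'h::{real_inner,complete_space}" and S f :: "'h \<Rightarrow> 'h" and DS :: "'h set"
  assumes lin: "linear_on_dom DS S"
    and ws: "weak_sol J DS S f Dmp u ut" and sub: "{p..q'} \<subseteq> J"
    and G: "\<And>\<tau>. \<tau> \<in> {p..q'} \<Longrightarrow> G \<tau> = f (u \<tau>) - Dmp \<tau> (ut \<tau>)"
    and Gc: "continuous_on {p..q'} G"
    and pq: "p \<le> q" and h: "0 < h" "q + h \<le> q'"
  shows "((\<lambda>t. inner (avg h G t) (avg h ut t)) has_integral (EH S u ut h q - EH S u ut h p)) {p..q}"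
proof -
  from ws have uD: "\<And>t. t \<in> J \<Longrightarrow> u t \<in> DS"
    and Suc: "continuous_on J (\<lambda>t. S (u t))"
    and ud: "\<And>t. t \<in> J \<Longrightarrow> (u has_vector_derivative ut t) (at t within J)"
    and utc: "continuous_on J ut"
    and weq: "\<And>phi s t. phi \<in> DS \<Longrightarrow> s \<in> J \<Longrightarrow> t \<in> J \<Longrightarrow> s \<le> t \<Longrightarrow>
        ((\<lambda>tau. inner (f (u tau)) phi - inner (S (u tau)) (S phi) - inner (Dmp tau (ut tau)) phi)
          has_integral (inner (ut t) phi - inner (ut s) phi)) {s..t}"
    unfolding weak_sol_def by auto
  let ?Su = "\<lambda>\<tau>. S (u \<tau>)"
  have Suc': "continuous_on {p..q'} ?Su" using continuous_on_subset[OF Suc sub] .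
  have utc': "continuous_on {p..q'} ut" using continuous_on_subset[OF utc sub] .
  have der: "((EH S u ut h) has_vector_derivative inner (avg h G t) (avg h ut t)) (at t within {p..q})"
    if t: "t \<in> {p..q}" for t
  proof -
    have tJ: "t \<in> J" "t + h \<in> J" using t h sub by auto
    have V: "avg h ut t = (1/h) *\<^sub>R (u (t+h) - u t)"
    proof (rule avg_ftc[OF _ h(1)])
      fix x assume "x \<in> {t..t+h}"
      hence "x \<in> J" "{t..t+h} \<subseteq> J" using t h sub by auto
      thus "(u has_vector_derivative ut x) (at x within {t..t+h})"
        using has_vector_derivative_within_subset[OF ud] by blast
    qed
    let ?phi = "avg h ut t"
    have phiD: "?phi \<in> DS" unfolding V using lin_dom_facts[OF lin uD[OF tJ(2)] uD[OF tJ(1)]]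
      by (metis lin lin_dom_facts(3))
    have Sphi: "S ?phi = (1/h) *\<^sub>R (?Su (t+h) - ?Su t)" unfolding V
      using lin_dom_facts[OF lin uD[OF tJ(2)] uD[OF tJ(1)]] lin_dom_facts(6)[OF lin _ uD[OF tJ(1)]] by metis
    have dV: "((\<lambda>t. avg h ut t) has_vector_derivative (1/h) *\<^sub>R (ut (t+h) - ut t)) (at t within {p..q})"
      by (rule avg_deriv[OF utc' t h(2,1)])
    have dY: "((\<lambda>t. avg h ?Su t) has_vector_derivative (1/h) *\<^sub>R (?Su (t+h) - ?Su t)) (at t within {p..q})"
      by (rule avg_deriv[OF Suc' t h(2,1)])
    have W: "((\<lambda>tau. inner (f (u tau)) ?phi - inner (S (u tau)) (S ?phi) - inner (Dmp tau (ut tau)) ?phi)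
          has_integral (inner (ut (t+h)) ?phi - inner (ut t) ?phi)) {t..t+h}"
      by (rule weq[OF phiD tJ(1) tJ(2)]) (use h in auto)
    have I1: "((\<lambda>\<tau>. inner (G \<tau>) ?phi) has_integral (h * inner (avg h G t) ?phi)) {t..t+h}"
      by (rule avg_inner[OF Gc]) (use t h in auto)
    have I2: "((\<lambda>\<tau>. inner (?Su \<tau>) (S ?phi)) has_integral (h * inner (avg h ?Su t) (S ?phi))) {t..t+h}"
      by (rule avg_inner[OF Suc']) (use t h in auto)
    have W2: "((\<lambda>tau. inner (f (u tau)) ?phi - inner (S (u tau)) (S ?phi) - inner (Dmp tau (ut tau)) ?phi)
          has_integral (h * inner (avg h G t) ?phi - h * inner (avg h ?Su t) (S ?phi))) {t..t+h}"
    proof (rule has_integral_cong[THEN iffD1, OF _ has_integral_diff[OF I1 I2]])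
      fix x assume "x \<in> {t..t+h}"
      hence "x \<in> {p..q'}" using t h by auto
      thus "inner (G x) ?phi - inner (?Su x) (S ?phi) = inner (f (u x)) ?phi - inner (S (u x)) (S ?phi) - inner (Dmp x (ut x)) ?phi"
        using G by (simp add: inner_diff_left)
    qed
    have key: "inner (ut (t+h)) ?phi - inner (ut t) ?phi = h * inner (avg h G t) ?phi - h * inner (avg h ?Su t) (S ?phi)"
      using has_integral_unique[OF W W2] .
    have key2: "inner ?phi ((1/h) *\<^sub>R (ut (t+h) - ut t)) + inner (avg h ?Su t) ((1/h) *\<^sub>R (?Su (t+h) - ?Su t))
        = inner (avg h G t) ?phi"
    proof -
      have "inner ?phi ((1/h) *\<^sub>R (ut (t+h) - ut t)) = (1/h) * (inner (ut (t+h)) ?phi - inner (ut t) ?phi)"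
        by (simp add: inner_diff_right inner_commute)
      also have "\<dots> = inner (avg h G t) ?phi - inner (avg h ?Su t) (S ?phi)" using key h by (simp add: field_simps)
      finally show ?thesis using Sphi by simp
    qed
    have dE: "((EH S u ut h) has_vector_derivative
        (1/2) * ((inner ?phi ((1/h) *\<^sub>R (ut (t+h) - ut t)) + inner ((1/h) *\<^sub>R (ut (t+h) - ut t)) ?phi) +
          (inner (avg h ?Su t) ((1/h) *\<^sub>R (?Su (t+h) - ?Su t)) + inner ((1/h) *\<^sub>R (?Su (t+h) - ?Su t)) (avg h ?Su t))))
        (at t within {p..q})"
      unfolding EH_def
      by (rule has_vector_derivative_mult_right[where a="1/2"], rule has_vector_derivative_add)
         (rule vd_inner[OF dV dV], rule vd_inner[OF dY dY])
    show ?thesis using dE key2 by (simp add: inner_commute algebra_simps)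
  qed
  show ?thesis by (rule fundamental_theorem_of_calculus[OF pq der])
qed


lemma cont_bounded_Icc:
  fixes g :: "real \<Rightarrow> 'a::real_normed_vector"
  assumes "continuous_on {a..b} g"
  obtains M where "0 \<le> M" "\<And>x. x \<in> {a..b} \<Longrightarrow> norm (g x) \<le> M"
proof -
  have "bounded (g ` {a..b})" by (rule compact_imp_bounded[OF compact_continuous_image[OF assms compact_Icc]])
  then obtain M where "\<And>x. x \<in> {a..b} \<Longrightarrow> norm (g x) \<le> M" unfolding bounded_iff by blast
  thus ?thesis using that[of "max M 0"] by fastforce
qed

lemma energy0:
  fixes u ut G :: "real \<Rightarrow> 'h::{real_inner,complete_space}" and S f :: "'h \<Rightarrow> 'h" and DS :: "'h set"
  assumes lin: "linear_on_dom DS S"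
    and ws: "weak_sol J DS S f Dmp u ut" and sub: "{p..q'} \<subseteq> J"
    and G: "\<And>\<tau>. \<tau> \<in> {p..q'} \<Longrightarrow> G \<tau> = f (u \<tau>) - Dmp \<tau> (ut \<tau>)"
    and Gc: "continuous_on {p..q'} G"
    and pq: "p \<le> q" and qq: "q < q'"
  shows "((\<lambda>t. inner (G t) (ut t)) has_integral
     ((1/2) * (inner (ut q) (ut q) + inner (S (u q)) (S (u q))) - (1/2) * (inner (ut p) (ut p) + inner (S (u p)) (S (u p))))) {p..q}"
proof -
  let ?Su = "\<lambda>\<tau>. S (u \<tau>)"
  from ws have Suc: "continuous_on J (\<lambda>t. S (u t))" and utc: "continuous_on J ut"
    unfolding weak_sol_def by auto
  have Suc': "continuous_on {p..q'} ?Su" using continuous_on_subset[OF Suc sub] .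
  have utc': "continuous_on {p..q'} ut" using continuous_on_subset[OF utc sub] .
  define hk where "hk k = (q' - q) * inverse (real (Suc k))" for k
  have hk0: "0 < hk k" for k using qq by (simp add: hk_def)
  have hkq: "q + hk k \<le> q'" for k
  proof -
    have "inverse (real (Suc k)) \<le> 1" by (auto simp: inverse_le_1_iff)
    hence "hk k \<le> (q' - q) * 1" unfolding hk_def using qq by (intro mult_left_mono) auto
    thus ?thesis by simp
  qed
  have hklim: "hk \<longlonglongrightarrow> 0"
    unfolding hk_def using tendsto_mult[OF tendsto_const LIMSEQ_inverse_real_of_nat, of "q'-q"] by simp
  have p_in: "p \<in> {p..q}" and q_in: "q \<in> {p..q}" using pq by auto
  obtain MG where MG: "0 \<le> MG" "\<And>x. x \<in> {p..q'} \<Longrightarrow> norm (G x) \<le> MG" using cont_bounded_Icc[OF Gc] by blast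
  obtain MU where MU: "0 \<le> MU" "\<And>x. x \<in> {p..q'} \<Longrightarrow> norm (ut x) \<le> MU" using cont_bounded_Icc[OF utc'] by blast
  define \<psi> where "\<psi> k t = inner (avg (hk k) G t) (avg (hk k) ut t)" for k t
  have RE: "(\<psi> k has_integral (EH S u ut (hk k) q - EH S u ut (hk k) p)) {p..q}" for k
    unfolding \<psi>_def by (rule reg_energy[OF lin ws sub G Gc pq hk0 hkq])
  have bnd: "norm (\<psi> k x) \<le> MG * MU" if x: "x \<in> {p..q}" for k x
  proof -
    have a1: "norm (avg (hk k) G x - 0) \<le> MG"
      by (rule avg_near[OF Gc]) (use x hk0[of k] hkq[of k] MG in auto)
    have a2: "norm (avg (hk k) ut x - 0) \<le> MU"
      by (rule avg_near[OF utc']) (use x hk0[of k] hkq[of k] MU in auto)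
    have "norm (\<psi> k x) \<le> norm (avg (hk k) G x) * norm (avg (hk k) ut x)"
      unfolding \<psi>_def real_norm_def by (rule Cauchy_Schwarz_ineq2)
    also have "\<dots> \<le> MG * MU" using a1 a2 MG MU by (intro mult_mono) auto
    finally show ?thesis .
  qed
  have conv: "(\<lambda>k. \<psi> k x) \<longlonglongrightarrow> inner (G x) (ut x)" if x: "x \<in> {p..q}" for x
    unfolding \<psi>_def
    by (rule tendsto_inner[OF avg_conv[OF Gc x hk0 hkq hklim] avg_conv[OF utc' x hk0 hkq hklim]])
  have DC: "(\<lambda>k. integral {p..q} (\<psi> k)) \<longlonglongrightarrow> integral {p..q} (\<lambda>x. inner (G x) (ut x))"
    "(\<lambda>x. inner (G x) (ut x)) integrable_on {p..q}"
    using dominated_convergence[of \<psi> "{p..q}" "\<lambda>x. MG * MU" "\<lambda>x. inner (G x) (ut x)", OF has_integral_integrable[OF RE] integrable_const_ivl bnd conv]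
    by auto
  have EHc: "(\<lambda>k. EH S u ut (hk k) t) \<longlonglongrightarrow> (1/2) * (inner (ut t) (ut t) + inner (S (u t)) (S (u t)))"
    if t: "t \<in> {p..q}" for t
    unfolding EH_def
    by (intro tendsto_mult tendsto_const tendsto_add tendsto_inner avg_conv[OF Suc' t hk0 hkq hklim] avg_conv[OF utc' t hk0 hkq hklim])
  have "(\<lambda>k. integral {p..q} (\<psi> k)) \<longlonglongrightarrow>
     (1/2) * (inner (ut q) (ut q) + inner (S (u q)) (S (u q))) - (1/2) * (inner (ut p) (ut p) + inner (S (u p)) (S (u p)))"
  proof -
    have eqi: "\<And>k. integral {p..q} (\<psi> k) = EH S u ut (hk k) q - EH S u ut (hk k) p" using RE integral_unique by blast
    show ?thesis unfolding eqi by (rule tendsto_diff[OF EHc[OF q_in] EHc[OF p_in]])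
  qed
  from LIMSEQ_unique[OF DC(1) this] DC(2) show ?thesis
    by (metis has_integral_integral)
qed



lemma F_segment_deriv:
  fixes w z :: "'h::real_inner" and DS :: "'h set"
  assumes lin: "linear_on_dom DS S" and Fd: "V_derivative DS S F f" and w: "w \<in> DS" and z: "z \<in> DS"
  shows "((\<lambda>y. F (w + y *\<^sub>R z)) has_field_derivative inner (f (w + s *\<^sub>R z)) z) (at s)"
proof -
  let ?v0 = "w + s *\<^sub>R z"
  have vy: "w + y *\<^sub>R z \<in> DS" for y by (rule lin_dom_facts(2)[OF lin w lin_dom_facts(3)[OF lin z z]])
  have v0: "?v0 \<in> DS" by (rule vy)
  have Sdiff: "S ((w + y *\<^sub>R z) - ?v0) = (y - s) *\<^sub>R S z" for y
  proof -
    have "(w + y *\<^sub>R z) - ?v0 = (y - s) *\<^sub>R z" by (simp add: algebra_simps)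
    thus ?thesis using lin_dom_facts(6)[OF lin z z] by simp
  qed
  let ?N = "norm (S z) + 1"
  have N: "0 < ?N" by (simp add: add_nonneg_pos)
  show ?thesis unfolding has_field_derivative_iff
  proof (rule tendstoI)
    fix e :: real assume e: "0 < e"
    obtain d where d: "0 < d" "\<And>v. v \<in> DS \<Longrightarrow> norm (S (v - ?v0)) < d \<Longrightarrow>
        \<bar>F v - F ?v0 - inner (f ?v0) (v - ?v0)\<bar> \<le> (e / (2 * ?N)) * norm (S (v - ?v0))"
      using Fd v0 e N unfolding V_derivative_def by (metis divide_pos_pos mult_pos_pos zero_less_numeral)
    show "eventually (\<lambda>y. dist ((F (w + y *\<^sub>R z) - F ?v0) / (y - s)) (inner (f ?v0) z) < e) (at s)"
      unfolding eventually_at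
    proof (intro exI[of _ "d / ?N"] conjI ballI impI)
      show "0 < d / ?N" using d N by simp
      fix y assume "y \<in> UNIV" and y: "y \<noteq> s \<and> dist y s < d / ?N"
      hence ys: "y - s \<noteq> 0" and yd: "\<bar>y - s\<bar> < d / ?N" by (auto simp: dist_real_def)
      have "norm (S ((w + y *\<^sub>R z) - ?v0)) = \<bar>y - s\<bar> * norm (S z)" unfolding Sdiff by simp
      also have "\<dots> \<le> \<bar>y - s\<bar> * ?N" by (intro mult_left_mono) auto
      also have "\<dots> < d" using yd N by (simp add: field_simps)
      finally have lt: "norm (S ((w + y *\<^sub>R z) - ?v0)) < d" .
      have b: "\<bar>F (w + y *\<^sub>R z) - F ?v0 - inner (f ?v0) ((y - s) *\<^sub>R z)\<bar> \<le> (e / (2 * ?N)) * (\<bar>y - s\<bar> * norm (S z))"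
      proof -
        have vv: "(w + y *\<^sub>R z) - ?v0 = (y - s) *\<^sub>R z" by (simp add: algebra_simps)
        have nS: "norm (S ((y - s) *\<^sub>R z)) = \<bar>y - s\<bar> * norm (S z)" using lin_dom_facts(6)[OF lin z z] by simp
        show ?thesis using d(2)[OF vy lt] by (simp only: vv nS)
      qed
      have eq: "(F (w + y *\<^sub>R z) - F ?v0) / (y - s) - inner (f ?v0) z
          = (F (w + y *\<^sub>R z) - F ?v0 - inner (f ?v0) ((y - s) *\<^sub>R z)) / (y - s)"
        using ys by (simp add: field_simps inner_diff_right)
      have "\<bar>(F (w + y *\<^sub>R z) - F ?v0) / (y - s) - inner (f ?v0) z\<bar>
          = \<bar>F (w + y *\<^sub>R z) - F ?v0 - inner (f ?v0) ((y - s) *\<^sub>R z)\<bar> / \<bar>y - s\<bar>"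
        unfolding eq by (simp add: abs_divide)
      also have "\<dots> \<le> (e / (2 * ?N)) * (\<bar>y - s\<bar> * norm (S z)) / \<bar>y - s\<bar>"
        using b ys by (intro divide_right_mono) auto
      also have "\<dots> = (e / (2 * ?N)) * norm (S z)" using ys by simp
      also have "\<dots> \<le> (e / (2 * ?N)) * ?N" using e N by (intro mult_left_mono) auto
      also have "\<dots> = e / 2" using N by (simp add: field_simps)
      also have "\<dots> < e" using e by simp
      finally show "dist ((F (w + y *\<^sub>R z) - F ?v0) / (y - s)) (inner (f ?v0) z) < e"
        by (simp add: dist_real_def)
    qed
  qed
qed

lemma F_mvt:
  fixes w z :: "'h::real_inner" and DS :: "'h set"
  assumes lin: "linear_on_dom DS S" and Fd: "V_derivative DS S F f" and w: "w \<in> DS" and z: "z \<in> DS"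
  shows "\<exists>\<xi>. 0 \<le> \<xi> \<and> \<xi> \<le> 1 \<and> F (w + z) - F w = inner (f (w + \<xi> *\<^sub>R z)) z"
proof -
  have "\<exists>x. 0 < x \<and> x < 1 \<and> F (w + 1 *\<^sub>R z) - F (w + 0 *\<^sub>R z) = (1 - 0) * inner (f (w + x *\<^sub>R z)) z"
    by (rule MVT2) (use F_segment_deriv[OF lin Fd w z] in auto)
  then obtain \<xi> where "0 < \<xi>" "\<xi> < 1" "F (w + 1 *\<^sub>R z) - F (w + 0 *\<^sub>R z) = (1 - 0) * inner (f (w + \<xi> *\<^sub>R z)) z"
    by blast
  thus ?thesis by (intro exI[of _ \<xi>]) auto
qed

lemma vd_quotient:
  fixes u :: "real \<Rightarrow> 'a::real_normed_vector"
  assumes "(u has_vector_derivative u') (at t within J)"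
  shows "((\<lambda>y. (1 / (y - t)) *\<^sub>R (u y - u t)) \<longlongrightarrow> u') (at t within J)"
proof -
  have o: "((\<lambda>y. (1 / norm (y - t)) *\<^sub>R (u y - (u t + (y - t) *\<^sub>R u'))) \<longlongrightarrow> 0) (at t within J)"
    using assms unfolding has_vector_derivative_def has_derivative_within by blast
  have "((\<lambda>y. (1 / (y - t)) *\<^sub>R (u y - u t) - u') \<longlongrightarrow> 0) (at t within J)"
  proof (rule Lim_null_comparison[OF _ tendsto_norm_zero[OF o]])
    show "eventually (\<lambda>y. norm ((1 / (y - t)) *\<^sub>R (u y - u t) - u') \<le>
        norm ((1 / norm (y - t)) *\<^sub>R (u y - (u t + (y - t) *\<^sub>R u')))) (at t within J)"
      unfolding eventually_at_filter
    proof (rule always_eventually, intro allI impI)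
      fix y :: real assume "y \<noteq> t"
      hence ne: "y - t \<noteq> 0" by simp
      have "(1 / (y - t)) *\<^sub>R (u y - u t) - u' = (1 / (y - t)) *\<^sub>R (u y - (u t + (y - t) *\<^sub>R u'))"
        using ne by (simp add: scaleR_diff_right scaleR_add_right diff_diff_eq[symmetric])
      thus "norm ((1 / (y - t)) *\<^sub>R (u y - u t) - u') \<le> norm ((1 / norm (y - t)) *\<^sub>R (u y - (u t + (y - t) *\<^sub>R u')))"
        by simp
    qed
  qed
  thus ?thesis by (simp add: LIM_zero_iff)
qed

lemma F_chain:
  fixes u ut :: "real \<Rightarrow> 'h::real_inner" and DS :: "'h set"
  assumes lin: "linear_on_dom DS S" and flip: "loc_lipschitz_V DS S f" and Fd: "V_derivative DS S F f"
    and uD: "\<And>t. t \<in> J \<Longrightarrow> u t \<in> DS" and Suc: "continuous_on J (\<lambda>t. S (u t))"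
    and ud: "(u has_vector_derivative ut t) (at t within J)" and t: "t \<in> J"
  shows "((\<lambda>t. F (u t)) has_field_derivative inner (f (u t)) (ut t)) (at t within J)"
proof -
  have ex: "\<forall>y\<in>J. \<exists>\<xi>. 0 \<le> \<xi> \<and> \<xi> \<le> 1 \<and> F (u y) - F (u t) = inner (f (u t + \<xi> *\<^sub>R (u y - u t))) (u y - u t)"
  proof
    fix y assume y: "y \<in> J"
    have z: "u y - u t \<in> DS" using lin_dom_facts(1)[OF lin uD[OF y] uD[OF t]] .
    from F_mvt[OF lin Fd uD[OF t] z] show "\<exists>\<xi>. 0 \<le> \<xi> \<and> \<xi> \<le> 1 \<and> F (u y) - F (u t) = inner (f (u t + \<xi> *\<^sub>R (u y - u t))) (u y - u t)"
      by simp
  qed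
  then obtain \<xi> where \<xi>: "\<And>y. y \<in> J \<Longrightarrow> 0 \<le> \<xi> y \<and> \<xi> y \<le> 1 \<and> F (u y) - F (u t) = inner (f (u t + \<xi> y *\<^sub>R (u y - u t))) (u y - u t)"
    by metis
  define M where "M y = u t + \<xi> y *\<^sub>R (u y - u t)" for y
  have MD: "M y \<in> DS" and SM: "norm (S (M y) - S (u t)) \<le> norm (S (u y) - S (u t))" if y: "y \<in> J" for y
  proof -
    have z: "u y - u t \<in> DS" using lin_dom_facts(1)[OF lin uD[OF y] uD[OF t]] .
    have z2: "\<xi> y *\<^sub>R (u y - u t) \<in> DS" using lin_dom_facts(3)[OF lin z z] .
    show "M y \<in> DS" unfolding M_def using lin_dom_facts(2)[OF lin uD[OF t] z2] .
    have "S (M y) - S (u t) = \<xi> y *\<^sub>R (S (u y) - S (u t))"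
      unfolding M_def using lin_dom_facts(5)[OF lin uD[OF t] z2] lin_dom_facts(6)[OF lin z z]
        lin_dom_facts(4)[OF lin uD[OF y] uD[OF t]] by simp
    hence "norm (S (M y) - S (u t)) = \<xi> y * norm (S (u y) - S (u t))" using \<xi>[OF y] by simp
    also have "\<dots> \<le> 1 * norm (S (u y) - S (u t))" using \<xi>[OF y] by (intro mult_right_mono) auto
    finally show "norm (S (M y) - S (u t)) \<le> norm (S (u y) - S (u t))" by simp
  qed
  define r where "r = norm (S (u t)) + 1"
  have r: "0 < r" unfolding r_def by (simp add: add_nonneg_pos)
  obtain L where L: "\<And>x y. x \<in> DS \<Longrightarrow> y \<in> DS \<Longrightarrow> norm (S x) \<le> r \<Longrightarrow> norm (S y) \<le> r \<Longrightarrow>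
      norm (f x - f y) \<le> L * norm (S (x - y))"
    using flip r unfolding loc_lipschitz_V_def by blast
  have Sut: "((\<lambda>y. S (u y)) \<longlongrightarrow> S (u t)) (at t within J)" using Suc t unfolding continuous_on_def by blast
  have ev1: "eventually (\<lambda>y. dist (S (u y)) (S (u t)) < 1) (at t within J)"
    using tendstoD[OF Sut, of 1] by simp
  have fM: "((\<lambda>y. f (M y)) \<longlongrightarrow> f (u t)) (at t within J)"
  proof -
    have B0: "((\<lambda>y. \<bar>L\<bar> * norm (S (u y) - S (u t))) \<longlongrightarrow> \<bar>L\<bar> * 0) (at t within J)"
      by (intro tendsto_mult tendsto_const tendsto_norm_zero LIM_zero Sut)
    hence B: "((\<lambda>y. \<bar>L\<bar> * norm (S (u y) - S (u t))) \<longlongrightarrow> 0) (at t within J)" by simp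
    have "((\<lambda>y. f (M y) - f (u t)) \<longlongrightarrow> 0) (at t within J)"
    proof (rule Lim_null_comparison[OF _ B])
      have evJ: "eventually (\<lambda>y. y \<in> J) (at t within J)" unfolding eventually_at_filter by (rule always_eventually) auto
      show "eventually (\<lambda>y. norm (f (M y) - f (u t)) \<le> \<bar>L\<bar> * norm (S (u y) - S (u t))) (at t within J)"
      proof (rule eventually_mono[OF eventually_conj[OF ev1 evJ]])
        fix y assume yy: "dist (S (u y)) (S (u t)) < 1 \<and> y \<in> J"
        hence y: "y \<in> J" and sm: "norm (S (M y) - S (u t)) < 1" using SM[of y] by (auto simp: dist_norm)
        have "norm (S (M y)) \<le> norm (S (u t)) + norm (S (M y) - S (u t))"
          by (metis add.commute diff_add_cancel norm_triangle_ineq)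
        hence nM: "norm (S (M y)) \<le> r" using sm unfolding r_def by simp
        have "norm (f (M y) - f (u t)) \<le> L * norm (S (M y - u t))"
          by (rule L[OF MD[OF y] uD[OF t] nM]) (simp add: r_def)
        also have "\<dots> = L * norm (S (M y) - S (u t))" using lin_dom_facts(4)[OF lin MD[OF y] uD[OF t]] by simp
        also have "\<dots> \<le> \<bar>L\<bar> * norm (S (M y) - S (u t))" by (intro mult_right_mono) auto
        also have "\<dots> \<le> \<bar>L\<bar> * norm (S (u y) - S (u t))" using SM[OF y] by (intro mult_left_mono) auto
        finally show "norm (f (M y) - f (u t)) \<le> \<bar>L\<bar> * norm (S (u y) - S (u t))" .
      qed
    qed
    thus ?thesis by (simp add: LIM_zero_iff)
  qed
  have Q: "((\<lambda>y. inner (f (M y)) ((1 / (y - t)) *\<^sub>R (u y - u t))) \<longlongrightarrow> inner (f (u t)) (ut t)) (at t within J)"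
    by (rule tendsto_inner[OF fM vd_quotient[OF ud]])
  show ?thesis unfolding has_field_derivative_iff
  proof (rule Lim_transform_eventually[OF Q])
    show "eventually (\<lambda>y. inner (f (M y)) ((1 / (y - t)) *\<^sub>R (u y - u t)) = (F (u y) - F (u t)) / (y - t)) (at t within J)"
      unfolding eventually_at_filter
    proof (rule always_eventually, intro allI impI)
      fix y assume "y \<noteq> t" "y \<in> J"
      thus "inner (f (M y)) ((1 / (y - t)) *\<^sub>R (u y - u t)) = (F (u y) - F (u t)) / (y - t)"
        using \<xi>[of y] unfolding M_def by (simp add: divide_inverse mult.commute)
    qed
  qed
qed



lemma fu_cont:
  fixes u :: "real \<Rightarrow> 'h::real_inner" and DS :: "'h set"
  assumes lin: "linear_on_dom DS S" and flip: "loc_lipschitz_V DS S f"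
    and uD: "\<And>t. t \<in> J \<Longrightarrow> u t \<in> DS" and Suc: "continuous_on J (\<lambda>t. S (u t))"
  shows "continuous_on J (\<lambda>t. f (u t))"
  unfolding continuous_on_def
proof
  fix t assume t: "t \<in> J"
  define r where "r = norm (S (u t)) + 1"
  have r: "0 < r" unfolding r_def by (simp add: add_nonneg_pos)
  obtain L where L: "\<And>x y. x \<in> DS \<Longrightarrow> y \<in> DS \<Longrightarrow> norm (S x) \<le> r \<Longrightarrow> norm (S y) \<le> r \<Longrightarrow>
      norm (f x - f y) \<le> L * norm (S (x - y))"
    using flip r unfolding loc_lipschitz_V_def by blast
  have Sut: "((\<lambda>y. S (u y)) \<longlongrightarrow> S (u t)) (at t within J)" using Suc t unfolding continuous_on_def by blast
  have ev1: "eventually (\<lambda>y. dist (S (u y)) (S (u t)) < 1) (at t within J)"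
    using tendstoD[OF Sut, of 1] by simp
  have B0: "((\<lambda>y. \<bar>L\<bar> * norm (S (u y) - S (u t))) \<longlongrightarrow> \<bar>L\<bar> * 0) (at t within J)"
    by (intro tendsto_mult tendsto_const tendsto_norm_zero LIM_zero Sut)
  hence B: "((\<lambda>y. \<bar>L\<bar> * norm (S (u y) - S (u t))) \<longlongrightarrow> 0) (at t within J)" by simp
  have "((\<lambda>y. f (u y) - f (u t)) \<longlongrightarrow> 0) (at t within J)"
  proof (rule Lim_null_comparison[OF _ B])
    have evJ: "eventually (\<lambda>y. y \<in> J) (at t within J)"
      unfolding eventually_at_filter by (rule always_eventually) auto
    show "eventually (\<lambda>y. norm (f (u y) - f (u t)) \<le> \<bar>L\<bar> * norm (S (u y) - S (u t))) (at t within J)"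
    proof (rule eventually_mono[OF eventually_conj[OF ev1 evJ]])
      fix y assume yy: "dist (S (u y)) (S (u t)) < 1 \<and> y \<in> J"
      hence y: "y \<in> J" and sm: "norm (S (u y) - S (u t)) < 1" by (auto simp: dist_norm)
      have "norm (S (u y)) \<le> norm (S (u t)) + norm (S (u y) - S (u t))"
        by (metis add.commute diff_add_cancel norm_triangle_ineq)
      hence nM: "norm (S (u y)) \<le> r" using sm unfolding r_def by simp
      have "norm (f (u y) - f (u t)) \<le> L * norm (S (u y - u t))"
        by (rule L[OF uD[OF y] uD[OF t] nM]) (simp add: r_def)
      also have "\<dots> = L * norm (S (u y) - S (u t))" using lin_dom_facts(4)[OF lin uD[OF y] uD[OF t]] by simp
      also have "\<dots> \<le> \<bar>L\<bar> * norm (S (u y) - S (u t))" by (intro mult_right_mono) auto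
      finally show "norm (f (u y) - f (u t)) \<le> \<bar>L\<bar> * norm (S (u y) - S (u t))" .
    qed
  qed
  thus "((\<lambda>y. f (u y)) \<longlongrightarrow> f (u t)) (at t within J)" by (simp add: LIM_zero_iff)
qed

definition Etot :: "('h::real_inner \<Rightarrow> 'h) \<Rightarrow> ('h \<Rightarrow> real) \<Rightarrow> (real \<Rightarrow> 'h) \<Rightarrow> (real \<Rightarrow> 'h) \<Rightarrow> real \<Rightarrow> real" where
  "Etot S F u ut t = (1/2) * (inner (ut t) (ut t) + inner (S (u t)) (S (u t))) - F (u t)"

lemma energy_piece:
  fixes u ut :: "real \<Rightarrow> 'h::{real_inner,complete_space}" and DS :: "'h set"
  assumes lin: "linear_on_dom DS S" and flip: "loc_lipschitz_V DS S f" and Fd: "V_derivative DS S F f"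
    and ws: "weak_sol J DS S f Dmp u ut" and sub: "{p..q'} \<subseteq> J"
    and Dc: "continuous_on {p..q'} (\<lambda>\<tau>. Dmp \<tau> (ut \<tau>))"
    and pq: "p \<le> q" and qq: "q < q'"
  shows "((\<lambda>\<tau>. - inner (Dmp \<tau> (ut \<tau>)) (ut \<tau>)) has_integral (Etot S F u ut q - Etot S F u ut p)) {p..q}"
proof -
  from ws have uD: "\<And>t. t \<in> J \<Longrightarrow> u t \<in> DS"
    and Suc: "continuous_on J (\<lambda>t. S (u t))"
    and ud: "\<And>t. t \<in> J \<Longrightarrow> (u has_vector_derivative ut t) (at t within J)"
    unfolding weak_sol_def by auto
  have fc: "continuous_on {p..q'} (\<lambda>t. f (u t))"
    using continuous_on_subset[OF fu_cont[OF lin flip uD Suc] sub] .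
  have Gc: "continuous_on {p..q'} (\<lambda>\<tau>. f (u \<tau>) - Dmp \<tau> (ut \<tau>))"
    by (intro continuous_on_diff fc Dc)
  have E0: "((\<lambda>t. inner (f (u t) - Dmp t (ut t)) (ut t)) has_integral
     ((1/2) * (inner (ut q) (ut q) + inner (S (u q)) (S (u q))) - (1/2) * (inner (ut p) (ut p) + inner (S (u p)) (S (u p))))) {p..q}"
    by (rule energy0[OF lin ws sub _ Gc pq qq]) simp
  have sub2: "{p..q} \<subseteq> J" using sub qq by auto
  have Fder: "((\<lambda>t. F (u t)) has_vector_derivative inner (f (u x)) (ut x)) (at x within {p..q})" if x: "x \<in> {p..q}" for x
  proof -
    have xJ: "x \<in> J" using x sub2 by auto
    have "((\<lambda>t. F (u t)) has_field_derivative inner (f (u x)) (ut x)) (at x within J)"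
      by (rule F_chain[where ut=ut and t=x, OF lin flip Fd uD Suc ud[OF xJ] xJ])
    hence "((\<lambda>t. F (u t)) has_field_derivative inner (f (u x)) (ut x)) (at x within {p..q})"
      using has_field_derivative_subset sub2 by blast
    thus ?thesis by (simp add: has_real_derivative_iff_has_vector_derivative)
  qed
  have FI: "((\<lambda>t. inner (f (u t)) (ut t)) has_integral (F (u q) - F (u p))) {p..q}"
    by (rule fundamental_theorem_of_calculus[OF pq Fder])
  from has_integral_diff[OF E0 FI] show ?thesis
    unfolding Etot_def by (simp add: inner_diff_left algebra_simps)
qed


lemma energy_full:
  fixes u ut :: "real \<Rightarrow> 'h::{real_inner,complete_space}" and DS :: "'h set"
  assumes lin: "linear_on_dom DS S" and flip: "loc_lipschitz_V DS S f" and Fd: "V_derivative DS S F f"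
    and ws: "weak_sol J DS S f Dmp u ut" and sub: "{a..b} \<subseteq> J" and ab: "a < b"
    and Dc: "\<And>q'. a \<le> q' \<Longrightarrow> q' < b \<Longrightarrow> continuous_on {a..q'} (\<lambda>\<tau>. Dmp \<tau> (ut \<tau>))"
    and cc: "\<And>x. x \<in> {a<..<b} \<Longrightarrow> inner (Dmp x (ut x)) (ut x) = cc x"
  shows "(cc has_integral (Etot S F u ut a - Etot S F u ut b)) {a..b}"
proof -
  from ws have uD: "\<And>t. t \<in> J \<Longrightarrow> u t \<in> DS"
    and Suc: "continuous_on J (\<lambda>t. S (u t))"
    and ud: "\<And>t. t \<in> J \<Longrightarrow> (u has_vector_derivative ut t) (at t within J)"
    and utc: "continuous_on J ut"
    unfolding weak_sol_def by auto
  let ?E = "Etot S F u ut"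
  have der: "(?E has_vector_derivative (- cc t)) (at t)" if t: "t \<in> {a<..<b}" for t
  proof -
    define q1 where "q1 = (t + b) / 2"
    define q' where "q' = (q1 + b) / 2"
    have tq1: "a < t" "t < q1" "q1 < q'" "q' < b" "a \<le> q'" using t unfolding q1_def q'_def by (auto simp: field_simps)
    have sub': "{a..q'} \<subseteq> J" using sub tq1 by auto
    have Dc': "continuous_on {a..q'} (\<lambda>\<tau>. Dmp \<tau> (ut \<tau>))" using Dc tq1 by auto
    let ?c = "\<lambda>\<tau>. - inner (Dmp \<tau> (ut \<tau>)) (ut \<tau>)"
    have cc1: "continuous_on {a..q1} ?c"
    proof -
      have "continuous_on {a..q'} ?c"
        by (intro continuous_intros Dc' continuous_on_subset[OF utc sub'])
      thus ?thesis by (rule continuous_on_subset) (use tq1 in auto)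
    qed
    have eqE: "?E y = ?E a + integral {a..y} ?c" if y: "y \<in> {a..q1}" for y
    proof -
      have "(?c has_integral (?E y - ?E a)) {a..y}"
        by (rule energy_piece[OF lin flip Fd ws sub' Dc']) (use y tq1 in auto)
      hence "integral {a..y} ?c = ?E y - ?E a" by (rule integral_unique)
      thus ?thesis by simp
    qed
    have "((\<lambda>y. integral {a..y} ?c) has_vector_derivative ?c t) (at t within {a..q1})"
      by (rule integral_has_vector_derivative[OF cc1]) (use tq1 in auto)
    hence "((\<lambda>y. integral {a..y} ?c) has_vector_derivative ?c t) (at t)"
      using at_within_Icc_at[OF tq1(1,2)] by simp
    hence d0: "((\<lambda>y. integral {a..y} ?c) has_field_derivative ?c t) (at t)"
      by (simp only: has_real_derivative_iff_has_vector_derivative)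
    have d1: "((\<lambda>y. ?E a + integral {a..y} ?c) has_field_derivative ?c t) (at t)"
      using DERIV_add[OF DERIV_const[of "?E a"] d0] by (simp only: add_0_left)
    have d2: "(?E has_field_derivative ?c t) (at t)"
    proof (rule has_field_derivative_transform_within_open[OF d1, of "{a<..<q1}"])
      show "open {a<..<q1}" by simp
      show "t \<in> {a<..<q1}" using tq1 by simp
      fix x assume x: "x \<in> {a<..<q1}"
      have "x \<in> {a..q1}" using x by simp
      from eqE[OF this] show "?E a + integral {a..x} ?c = ?E x" by simp
    qed
    show ?thesis using d2 cc[OF t] by (simp add: has_real_derivative_iff_has_vector_derivative[symmetric])
  qed
  have Econt: "continuous_on {a..b} ?E"
  proof -
    have Fc: "continuous_on {a..b} (\<lambda>t. F (u t))"
    proof (rule DERIV_continuous_on)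
      fix x assume x: "x \<in> {a..b}"
      hence xJ: "x \<in> J" using sub by auto
      have "((\<lambda>t. F (u t)) has_field_derivative inner (f (u x)) (ut x)) (at x within J)"
        by (rule F_chain[where ut=ut and t=x, OF lin flip Fd uD Suc ud[OF xJ] xJ])
      thus "((\<lambda>t. F (u t)) has_field_derivative inner (f (u x)) (ut x)) (at x within {a..b})"
        using has_field_derivative_subset sub by blast
    qed
    show ?thesis unfolding Etot_def
      by (intro continuous_intros Fc continuous_on_subset[OF utc sub] continuous_on_subset[OF Suc sub])
  qed
  have "((\<lambda>x. - cc x) has_integral (?E b - ?E a)) {a..b}"
    by (rule fundamental_theorem_of_calculus_interior_strong[of "{}"]) (use ab der Econt in auto)
  from has_integral_neg[OF this] show ?thesis by simp
qed



lemma adj_norm: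
  fixes C :: "'u::real_inner \<Rightarrow>\<^sub>L 'h::real_inner"
  assumes "is_adjoint C Cs"
  shows "norm Cs \<le> norm C"
proof (rule norm_blinfun_bound)
  show "0 \<le> norm C" by simp
  fix y
  have "(norm (Cs y))\<^sup>2 = inner (C (Cs y)) y"
    using assms unfolding is_adjoint_def by (simp add: power2_norm_eq_inner)
  also have "\<dots> \<le> norm (C (Cs y)) * norm y" by (rule norm_cauchy_schwarz)
  also have "\<dots> \<le> norm C * norm (Cs y) * norm y" by (intro mult_right_mono norm_blinfun) auto
  finally have le: "(norm (Cs y))\<^sup>2 \<le> norm C * norm (Cs y) * norm y" .
  show "norm (Cs y) \<le> norm C * norm y"
  proof (cases "norm (Cs y) = 0")
    case True thus ?thesis by simp
  next
    case False
    hence pos: "0 < norm (Cs y)" by simp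
    have "norm (Cs y) * norm (Cs y) \<le> (norm C * norm y) * norm (Cs y)"
      using le by (simp add: power2_eq_square algebra_simps)
    thus ?thesis using pos by simp
  qed
qed

lemma adj_diff:
  assumes "is_adjoint B Bs" "is_adjoint B' Bs'"
  shows "is_adjoint (B - B') (Bs - Bs')"
  using assms unfolding is_adjoint_def by (simp add: blinfun.diff_left inner_diff_left inner_diff_right)

lemma adj_cont:
  fixes B :: "real \<Rightarrow> ('u::real_inner \<Rightarrow>\<^sub>L 'h::real_inner)"
  assumes adj: "\<And>t. is_adjoint (B t) (Bs t)" and c: "continuous_on K B"
  shows "continuous_on K Bs"
  unfolding continuous_on_def
proof
  fix x assume x: "x \<in> K"
  have "(B \<longlongrightarrow> B x) (at x within K)" using c x unfolding continuous_on_def by blast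
  thus "(Bs \<longlongrightarrow> Bs x) (at x within K)"
  proof (rule metric_tendsto_imp_tendsto)
    show "eventually (\<lambda>y. dist (Bs y) (Bs x) \<le> dist (B y) (B x)) (at x within K)"
      by (rule always_eventually) (auto simp: dist_norm intro: adj_norm adj_diff adj)
  qed
qed

lemma weak_sol_restrict:
  assumes ws: "weak_sol J DS S f Dmp u ut" and sub: "{a..b} \<subseteq> J"
    and eq: "\<And>\<tau> x. \<tau> \<in> {a..<b} \<Longrightarrow> Dmp' \<tau> x = Dmp \<tau> x"
  shows "weak_sol {a..b} DS S f Dmp' u ut"
proof -
  from ws have uD: "\<forall>t\<in>J. u t \<in> DS" and uc: "continuous_on J u" and Suc: "continuous_on J (\<lambda>t. S (u t))"
    and ud: "\<forall>t\<in>J. (u has_vector_derivative ut t) (at t within J)" and utc: "continuous_on J ut"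
    and weq: "\<forall>phi\<in>DS. \<forall>s\<in>J. \<forall>t\<in>J. s \<le> t \<longrightarrow>
        ((\<lambda>tau. inner (f (u tau)) phi - inner (S (u tau)) (S phi) - inner (Dmp tau (ut tau)) phi)
          has_integral (inner (ut t) phi - inner (ut s) phi)) {s..t}"
    unfolding weak_sol_def by auto
  show ?thesis unfolding weak_sol_def
  proof (intro conjI ballI impI)
    show "\<And>t. t \<in> {a..b} \<Longrightarrow> u t \<in> DS" using uD sub by auto
    show "continuous_on {a..b} u" by (rule continuous_on_subset[OF uc sub])
    show "continuous_on {a..b} (\<lambda>t. S (u t))" by (rule continuous_on_subset[OF Suc sub])
    show "continuous_on {a..b} ut" by (rule continuous_on_subset[OF utc sub])
    show "\<And>t. t \<in> {a..b} \<Longrightarrow> (u has_vector_derivative ut t) (at t within {a..b})"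
      using ud sub has_vector_derivative_within_subset by blast
    fix phi s t assume phi: "phi \<in> DS" and s: "s \<in> {a..b}" and t: "t \<in> {a..b}" and st: "s \<le> t"
    have W: "((\<lambda>tau. inner (f (u tau)) phi - inner (S (u tau)) (S phi) - inner (Dmp tau (ut tau)) phi)
          has_integral (inner (ut t) phi - inner (ut s) phi)) {s..t}"
      using weq phi s t st sub by blast
    show "((\<lambda>tau. inner (f (u tau)) phi - inner (S (u tau)) (S phi) - inner (Dmp' tau (ut tau)) phi)
          has_integral (inner (ut t) phi - inner (ut s) phi)) {s..t}"
    proof (rule has_integral_spike_finite[OF _ _ W, of "{b}"])
      fix x assume "x \<in> {s..t} - {b}"
      hence "x \<in> {a..<b}" using s t by auto
      thus "inner (f (u x)) phi - inner (S (u x)) (S phi) - inner (Dmp' x (ut x)) phi =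
          inner (f (u x)) phi - inner (S (u x)) (S phi) - inner (Dmp x (ut x)) phi" using eq by simp
    qed simp
  qed
qed

lemma energy_Etot: "Etot S F u ut t = energy S F u ut t"
  unfolding Etot_def energy_def by (simp add: power2_norm_eq_inner algebra_simps)

theorem proposition4p2:
  fixes A S :: "'h::{real_inner,complete_space} \<Rightarrow> 'h"
    and DA DS :: "'h set"
    and B1 :: "real \<Rightarrow> ('u1::{real_inner,complete_space} \<Rightarrow>\<^sub>L 'h)"
    and B1s :: "real \<Rightarrow> ('h \<Rightarrow>\<^sub>L 'u1)"
    and B3 :: "real \<Rightarrow> ('u3::{real_inner,complete_space} \<Rightarrow>\<^sub>L 'h)"
    and B3s :: "real \<Rightarrow> ('h \<Rightarrow>\<^sub>L 'u3)"
    and iota :: "'h \<Rightarrow> 'w::{real_inner,complete_space}"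
    and C1 :: real
    and f :: "'h \<Rightarrow> 'h" and F :: "'h \<Rightarrow> real"
    and tt :: "nat \<Rightarrow> real" and Tbar :: "nat \<Rightarrow> real"
    and d :: "nat \<Rightarrow> real \<Rightarrow> real"
    and u ut :: "real \<Rightarrow> 'h"
  defines "TT \<equiv> \<lambda>n. tt (Suc n) - tt n"
  assumes A_sa: "self_adjoint_op DA A"
    and A_pos: "positive_op DA A"
    and A_coer: "coercive_op DA A"
    and S_sqrt: "is_op_sqrt DS S DA A"
    and B1_adj: "\<And>t. is_adjoint (B1 t) (B1s t)"
    and B3_adj: "\<And>t. is_adjoint (B3 t) (B3s t)"
    and B13: "\<And>t. t > 0 \<Longrightarrow> B1s t o\<^sub>L B3 t = 0"
    and tt0: "tt 0 = 0" and tt_mono: "strict_mono tt"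
    and B3_zero: "\<And>n t. t \<in> {tt (2*n)..<tt (2*n+1)} \<Longrightarrow> B3 t = 0"
    and B1_zero: "\<And>n t. t \<in> {tt (2*n+1)..<tt (2*n+2)} \<Longrightarrow> B1 t = 0"
    and B1_C1: "\<And>n. \<exists>g g'. (\<forall>t\<in>{tt (2*n)..<tt (2*n+1)}. B1 t = g t) \<and>
                  (\<forall>t\<in>{tt (2*n)..tt (2*n+1)}.
                      (g has_vector_derivative g' t) (at t within {tt (2*n)..tt (2*n+1)})) \<and>
                  continuous_on {tt (2*n)..tt (2*n+1)} g'"
    and B3_C: "\<And>n. \<exists>g. (\<forall>t\<in>{tt (2*n+1)..<tt (2*n+2)}. B3 t = g t) \<and>
                  continuous_on {tt (2*n+1)..tt (2*n+2)} g"
    and W1_emb: "linear iota" "inj iota" "\<And>x. (norm (iota x))\<^sup>2 \<le> C1 * (norm x)\<^sup>2"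
    and f_lip: "loc_lipschitz_V DS S f"
    and F0: "F 0 = 0"
    and F_deriv: "V_derivative DS S F f"
    and cond_j: "\<And>n. \<exists>m M. 0 < m \<and> m \<le> M \<and>
                   (\<forall>x. \<forall>t\<in>{tt (2*n)..<tt (2*n+1)}.
                      m * (norm (iota x))\<^sup>2 \<le> (norm (B1s t x))\<^sup>2 \<and>
                      (norm (B1s t x))\<^sup>2 \<le> M * (norm (iota x))\<^sup>2)"
    and Tbar_lt: "\<And>n. Tbar n < TT (2*n)"
    and obs: "\<And>n T w wt. T \<in> {Tbar n<..TT (2*n)} \<Longrightarrow>
                 0 < d n T \<and>
                 (weak_sol {tt (2*n)..tt (2*n+1)} DS S f (\<lambda>t x. B1 t (B1s t x)) w wt \<longrightarrow>
                  energy S F w wt (tt (2*n) + T)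
                    \<le> d n T * integral {tt (2*n)..tt (2*n) + T} (\<lambda>t. (norm (B1s t (wt t)))\<^sup>2))"
    and u_sol: "weak_sol {0..} DS S f (\<lambda>t x. B1 t (B1s t x) - B3 t (B3s t x)) u ut"
  shows "\<forall>n. energy S F u ut (tt (2*n+1))
              \<le> d n (TT (2*n)) / (d n (TT (2*n)) + 1) * energy S F u ut (tt (2*n))"
proof
  fix n
  define a where "a = tt (2*n)"
  define b where "b = tt (2*n+1)"
  have ab: "a < b" unfolding a_def b_def using tt_mono by (simp add: strict_mono_less)
  have a0: "0 \<le> a" unfolding a_def using tt0 tt_mono by (metis le0 strict_mono_less_eq)
  have lin: "linear_on_dom DS S"
    using S_sqrt unfolding is_op_sqrt_def self_adjoint_op_def by blast
  let ?D = "\<lambda>t x. B1 t (B1s t x) - B3 t (B3s t x)"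
  have sub: "{a..b} \<subseteq> {0..}" using a0 by auto
  have ws: "weak_sol {0..} DS S f ?D u ut" by (rule u_sol)
  have utc: "continuous_on {0..} ut" using ws unfolding weak_sol_def by blast
  obtain g g' where g: "\<And>t. t \<in> {a..<b} \<Longrightarrow> B1 t = g t"
      and gd: "\<And>t. t \<in> {a..b} \<Longrightarrow> (g has_vector_derivative g' t) (at t within {a..b})"
    using B1_C1[of n] unfolding a_def b_def by blast
  have gc: "continuous_on {a..b} g"
    unfolding continuous_on_eq_continuous_within using gd has_vector_derivative_continuous by blast
  have B3z: "\<And>t. t \<in> {a..<b} \<Longrightarrow> B3 t = 0" using B3_zero unfolding a_def b_def by blast
  have Dc: "continuous_on {a..q'} (\<lambda>\<tau>. ?D \<tau> (ut \<tau>))" if q': "a \<le> q'" "q' < b" for q'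
  proof -
    have B1c: "continuous_on {a..q'} B1"
    proof -
      have "continuous_on {a..q'} g" by (rule continuous_on_subset[OF gc]) (use q' in auto)
      thus ?thesis by (rule continuous_on_cong[THEN iffD2, OF refl, rotated]) (use g q' in auto)
    qed
    have B1sc: "continuous_on {a..q'} B1s" by (rule adj_cont[OF B1_adj B1c])
    have utc': "continuous_on {a..q'} ut" by (rule continuous_on_subset[OF utc]) (use a0 in auto)
    have "continuous_on {a..q'} (\<lambda>\<tau>. B1 \<tau> (B1s \<tau> (ut \<tau>)))"
      by (intro continuous_intros B1c B1sc utc')
    thus ?thesis by (rule continuous_on_cong[THEN iffD2, OF refl, rotated]) (use B3z q' in auto)
  qed
  have cc: "inner (?D x (ut x)) (ut x) = (norm (B1s x (ut x)))\<^sup>2" if x: "x \<in> {a<..<b}" for x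
  proof -
    have "B3 x = 0" using B3z x by auto
    hence "?D x (ut x) = B1 x (B1s x (ut x))" by simp
    moreover have "inner (B1 x (B1s x (ut x))) (ut x) = inner (B1s x (ut x)) (B1s x (ut x))"
      using B1_adj[of x] unfolding is_adjoint_def by blast
    ultimately show ?thesis by (simp add: power2_norm_eq_inner)
  qed
  have EI: "((\<lambda>x. (norm (B1s x (ut x)))\<^sup>2) has_integral (Etot S F u ut a - Etot S F u ut b)) {a..b}"
    by (rule energy_full[OF lin f_lip F_deriv ws sub ab Dc cc])
  have EI2: "integral {a..b} (\<lambda>x. (norm (B1s x (ut x)))\<^sup>2) = energy S F u ut a - energy S F u ut b"
    using integral_unique[OF EI] by (simp add: energy_Etot)
  have TT2: "TT (2*n) = b - a" unfolding TT_def a_def b_def by simp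
  have Tin: "TT (2*n) \<in> {Tbar n<..TT (2*n)}" using Tbar_lt[of n] by simp
  have wsr: "weak_sol {tt (2*n)..tt (2*n+1)} DS S f (\<lambda>t x. B1 t (B1s t x)) u ut"
    by (rule weak_sol_restrict[OF ws sub[unfolded a_def b_def]]) (use B3_zero in auto)
  from obs[OF Tin] wsr
  have dpos: "0 < d n (TT (2*n))" and
    ob: "energy S F u ut (tt (2*n) + TT (2*n)) \<le> d n (TT (2*n)) * integral {tt (2*n)..tt (2*n) + TT (2*n)} (\<lambda>t. (norm (B1s t (ut t)))\<^sup>2)"
    by auto
  have ob2: "energy S F u ut b \<le> d n (TT (2*n)) * (energy S F u ut a - energy S F u ut b)"
    using ob EI2 unfolding TT2 a_def by simp
  define dd where "dd = d n (TT (2*n))"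
  have "energy S F u ut b * (dd + 1) \<le> dd * energy S F u ut a"
    using ob2 unfolding dd_def[symmetric] by (simp add: algebra_simps)
  hence "energy S F u ut b \<le> dd * energy S F u ut a / (dd + 1)"
    using dpos unfolding dd_def[symmetric] by (simp add: pos_le_divide_eq)
  thus "energy S F u ut (tt (2*n+1)) \<le> d n (TT (2*n)) / (d n (TT (2*n)) + 1) * energy S F u ut (tt (2*n))"
    unfolding dd_def a_def b_def by simp
qed



end
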